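(* Let $s\in(0,1)$. The function $\tau^n_s:[0,2\pi]\to[0,\infty]$ is increasing on $[0,2\pi]$.
   Context: For $n\ge1$ and $s\in(0,1)$, $\tau^n_s(2\pi)=+\infty$, $\tau^n_s(0)=s^{\frac{2n+3}{2n+1}}$, and for $\theta\in(0,2\pi)$, $$\tau^n_s(\theta)=s^{\frac1{2n+1}}\left(\frac{\sin\frac{\theta s}{2}}{\sin\frac{\theta}{2}}\right)^{\frac{2n-1}{2n+1}}\left(\frac{\sin\frac{\theta s}{2}-\frac{\theta s}{2}\cos\frac{\theta s}{2}}{\sin\frac{\theta}{2}-\frac{\theta}{2}\cos\frac{\theta}{2}}\right)^{\frac1{2n+1}}.$$ *)

theory Defs
  imports "HOL-Analysis.Analysis"
begin

text \<open>The function tau^n_s on [0, 2 pi], with values in [0, +infinity] (extended reals).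
  Outside [0, 2 pi] the value is irrelevant (set to 0).\<close>
definition tau :: "nat \<Rightarrow> real \<Rightarrow> real \<Rightarrow> ereal" where
  "tau n s \<theta> =
    (if \<theta> = 2 * pi then \<infinity>
     else if \<theta> = 0 then ereal (s powr ((2 * real n + 3) / (2 * real n + 1)))
     else if 0 < \<theta> \<and> \<theta> < 2 * pi then
       ereal (s powr (1 / (2 * real n + 1))
         * (sin (\<theta> * s / 2) / sin (\<theta> / 2)) powr ((2 * real n - 1) / (2 * real n + 1))
         * ((sin (\<theta> * s / 2) - (\<theta> * s / 2) * cos (\<theta> * s / 2))
             / (sin (\<theta> / 2) - (\<theta> / 2) * cos (\<theta> / 2))) powr (1 / (2 * real n + 1)))
     else 0)"

end

theory Submission
  imports Defs
begin

definition hh :: "real \<Rightarrow> real" where "hh x = sin x - x * cos x"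

lemma hh_deriv: "(hh has_real_derivative (x * sin x)) (at x)"
  unfolding hh_def by (auto intro!: derivative_eq_intros simp: algebra_simps)

lemma hh_cont: "continuous_on A hh"
  unfolding hh_def by (intro continuous_intros)

lemma hh_pos: assumes "0 < x" "x < pi" shows "hh x > 0"
proof -
  have "hh 0 < hh x"
  proof (rule DERIV_pos_imp_increasing_open[OF assms(1)])
    fix y assume "0 < y" "y < x"
    then show "\<exists>d. DERIV hh y :> d \<and> d > 0"
      using hh_deriv sin_gt_zero[of y] assms by (intro exI[of _ "y * sin y"]) auto
  qed (rule hh_cont)
  then show ?thesis by (simp add: hh_def)
qed

lemma P_nonneg: assumes "0 < s" "s < 1" "0 \<le> x" "x < pi"
  shows "s * cos (s*x) * sin x - sin (s*x) * cos x \<ge> 0"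
proof -
  let ?P = "\<lambda>x. s * cos (s*x) * sin x - sin (s*x) * cos x"
  have "?P 0 \<le> ?P x"
  proof (rule DERIV_nonneg_imp_increasing_open[OF assms(3)])
    fix y assume y: "0 < y" "y < x"
    have "DERIV ?P y :> (1 - s^2) * sin (s*y) * sin y"
      by (auto intro!: derivative_eq_intros simp: algebra_simps power2_eq_square)
    moreover have "(1 - s^2) * sin (s*y) * sin y \<ge> 0"
    proof -
      have "s*y < pi" using assms y by (smt (verit) mult_less_cancel_right2)
      then have "sin (s*y) > 0" "sin y > 0" using assms y by (auto intro!: sin_gt_zero)
      moreover have "1 - s^2 > 0"
      proof -
        have "s * s < 1 * 1" using assms by (intro mult_strict_mono) auto
        then show ?thesis by (simp add: power2_eq_square)
      qed
      ultimately show ?thesis by simp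
    qed
    ultimately show "\<exists>d. DERIV ?P y :> d \<and> d \<ge> 0" by blast
  qed (intro continuous_intros)
  then show ?thesis by simp
qed

lemma sin_ratio_mono: assumes "0 < s" "s < 1" "0 < a" "a \<le> b" "b < pi"
  shows "sin (s*a) / sin a \<le> sin (s*b) / sin b"
proof (rule DERIV_nonneg_imp_increasing_open[OF assms(4)])
  fix y assume y: "a < y" "y < b"
  have sy: "sin y > 0" using y assms by (auto intro!: sin_gt_zero)
  have "DERIV (\<lambda>x. sin (s*x) / sin x) y :> (s * cos (s*y) * sin y - sin (s*y) * cos y) / (sin y)^2"
    using sy by (auto intro!: derivative_eq_intros simp: algebra_simps power2_eq_square)
  moreover have "(s * cos (s*y) * sin y - sin (s*y) * cos y) / (sin y)^2 \<ge> 0"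
    using P_nonneg[of s y] assms y by auto
  ultimately show "\<exists>d. DERIV (\<lambda>x. sin (s*x) / sin x) y :> d \<and> d \<ge> 0" by blast
next
  have "\<forall>x\<in>{a..b}. sin x \<noteq> 0"
  proof
    fix x assume "x \<in> {a..b}" then have "sin x > 0" using assms by (intro sin_gt_zero) auto
    then show "sin x \<noteq> 0" by simp
  qed
  then show "continuous_on {a..b} (\<lambda>x. sin (s*x) / sin x)" by (intro continuous_intros) auto
qed

lemma hh_deriv2[derivative_intros]:
  "(f has_real_derivative f') (at x within S) \<Longrightarrow>
   ((\<lambda>x. hh (f x)) has_real_derivative (f x * sin (f x) * f')) (at x within S)"
  unfolding hh_def by (auto intro!: derivative_eq_intros simp: algebra_simps)

lemma hh0: "hh 0 = 0" by (simp add: hh_def)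

lemma Q_nonneg: assumes "0 < s" "s < 1" "0 < y" "y < pi"
  shows "hh (s*y) * sin y \<le> s^2 * hh y * sin (s*y)"
proof -
  obtain c where c: "0 < c" "c < y"
    "(hh (s*y) - hh (s*0)) * (c * sin c) = (hh y - hh 0) * (s*c * sin (s*c) * s)"
  proof -
    have "\<exists>c. 0 < c \<and> c < y \<and> ((\<lambda>t. hh (s*t)) y - (\<lambda>t. hh (s*t)) 0) * (c * sin c)
          = (hh y - hh 0) * (s*c * sin (s*c) * s)"
    proof (rule GMVT'[where f="\<lambda>t. hh (s*t)" and g=hh and g'="\<lambda>c. c * sin c"
          and f'="\<lambda>c. s*c * sin (s*c) * s", OF assms(3)])
      fix z show "isCont (\<lambda>t. hh (s*t)) z" unfolding hh_def by (intro continuous_intros)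
      show "isCont hh z" unfolding hh_def by (intro continuous_intros)
      show "DERIV hh z :> z * sin z" by (rule hh_deriv)
      show "DERIV (\<lambda>t. hh (s*t)) z :> s*z * sin (s*z) * s"
        by (auto intro!: derivative_eq_intros)
    qed
    then show ?thesis using that by auto
  qed
  have sc: "sin c > 0" using c assms by (intro sin_gt_zero) auto
  have sy: "sin y > 0" using c assms by (intro sin_gt_zero) auto
  have hy: "hh y > 0" using assms by (intro hh_pos) auto
  from c(3) have e: "hh (s*y) * sin c = s^2 * hh y * sin (s*c)"
    using c(1) by (simp add: hh0 power2_eq_square)
  have r: "sin (s*c) / sin c \<le> sin (s*y) / sin y"
    using sin_ratio_mono[of s c y] assms c by auto
  have "hh (s*y) = s^2 * hh y * (sin (s*c) / sin c)" using e sc by (simp add: field_simps)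
  also have "\<dots> \<le> s^2 * hh y * (sin (s*y) / sin y)"
    using r hy by (intro mult_left_mono) auto
  finally show ?thesis using sy by (simp add: field_simps)
qed

lemma hh_ratio_mono: assumes "0 < s" "s < 1" "0 < a" "a \<le> b" "b < pi"
  shows "hh (s*a) / hh a \<le> hh (s*b) / hh b"
proof (rule DERIV_nonneg_imp_increasing_open[OF assms(4)])
  fix y assume y: "a < y" "y < b"
  have hy: "hh y > 0" using y assms by (intro hh_pos) auto
  have "DERIV (\<lambda>x. hh (s*x) / hh x) y :>
      ((s*y * sin (s*y) * s) * hh y - hh (s*y) * (y * sin y)) / (hh y)^2"
    using hy by (auto intro!: derivative_eq_intros hh_deriv simp: power2_eq_square)
  moreover have "((s*y * sin (s*y) * s) * hh y - hh (s*y) * (y * sin y)) / (hh y)^2 \<ge> 0"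
  proof -
    have "(s*y * sin (s*y) * s) * hh y - hh (s*y) * (y * sin y)
        = y * (s^2 * hh y * sin (s*y) - hh (s*y) * sin y)" by (simp add: algebra_simps power2_eq_square)
    moreover have "y * (s^2 * hh y * sin (s*y) - hh (s*y) * sin y) \<ge> 0"
      using Q_nonneg[of s y] assms y by auto
    ultimately show ?thesis by simp
  qed
  ultimately show "\<exists>d. DERIV (\<lambda>x. hh (s*x) / hh x) y :> d \<and> d \<ge> 0" by blast
next
  have "\<forall>x\<in>{a..b}. hh x \<noteq> 0"
  proof
    fix x assume "x \<in> {a..b}" then have "hh x > 0" using assms by (intro hh_pos) auto
    then show "hh x \<noteq> 0" by simp
  qed
  then show "continuous_on {a..b} (\<lambda>x. hh (s*x) / hh x)"
    unfolding hh_def by (intro continuous_intros) auto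
qed

lemma sin_lower: assumes "0 < s" "s < 1" "0 \<le> x" "x \<le> pi"
  shows "s * sin x \<le> sin (s*x)"
proof -
  have "sin (s*0) - s * sin 0 \<le> sin (s*x) - s * sin x"
  proof (rule DERIV_nonneg_imp_increasing_open[OF assms(3)])
    fix y assume y: "0 < y" "y < x"
    have "DERIV (\<lambda>x. sin (s*x) - s * sin x) y :> s * (cos (s*y) - cos y)"
      by (auto intro!: derivative_eq_intros simp: algebra_simps)
    moreover have "cos y \<le> cos (s*y)" using assms y
      by (intro cos_monotone_0_pi_le) (auto simp: mult_le_cancel_right1)
    ultimately show "\<exists>d. DERIV (\<lambda>x. sin (s*x) - s * sin x) y :> d \<and> d \<ge> 0"
      using assms by (intro exI[of _ "s * (cos (s*y) - cos y)"]) auto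
  qed (intro continuous_intros)
  then show ?thesis by simp
qed

lemma hh_lower: assumes "0 < s" "s < 1" "0 \<le> x" "x \<le> pi"
  shows "s^3 * hh x \<le> hh (s*x)"
proof -
  have "hh (s*0) - s^3 * hh 0 \<le> hh (s*x) - s^3 * hh x"
  proof (rule DERIV_nonneg_imp_increasing_open[OF assms(3)])
    fix y assume y: "0 < y" "y < x"
    have "DERIV (\<lambda>x. hh (s*x) - s^3 * hh x) y :> s^2 * y * (sin (s*y) - s * sin y)"
      by (auto intro!: derivative_eq_intros hh_deriv simp: algebra_simps power2_eq_square power3_eq_cube)
    moreover have "s * sin y \<le> sin (s*y)" using assms y by (intro sin_lower) auto
    ultimately show "\<exists>d. DERIV (\<lambda>x. hh (s*x) - s^3 * hh x) y :> d \<and> d \<ge> 0"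
      using assms y by (intro exI[of _ "s^2 * y * (sin (s*y) - s * sin y)"]) auto
  qed (unfold hh_def, intro continuous_intros)
  then show ?thesis by (simp add: hh0)
qed

lemma tau_open:
  assumes "0 < t" "t < 2*pi"
  shows "tau n s t = ereal (s powr (1 / (2 * real n + 1))
     * (sin (s*(t/2)) / sin (t/2)) powr ((2 * real n - 1) / (2 * real n + 1))
     * (hh (s*(t/2)) / hh (t/2)) powr (1 / (2 * real n + 1)))"
proof -
  have eq: "t * s / 2 = s * (t / 2)" by simp
  have "t \<noteq> 2*pi" "t \<noteq> 0" using assms by auto
  then show ?thesis using assms by (simp only: tau_def hh_def eq if_False if_True) simp
qed

theorem lemma2p1:
  fixes n :: nat and s :: real
  assumes "n \<ge> 1" and "0 < s" and "s < 1"
  shows "mono_on {0..2 * pi} (tau n s)"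
proof (rule mono_onI)
  define e1 where "e1 = 1 / (2 * real n + 1)"
  define e2 where "e2 = (2 * real n - 1) / (2 * real n + 1)"
  have e1: "e1 \<ge> 0" and e2: "e2 \<ge> 0" using assms(1) by (auto simp: e1_def e2_def)
  define F where "F t = sin (s*(t/2)) / sin (t/2)" for t
  define G where "G t = hh (s*(t/2)) / hh (t/2)" for t
  have tauo: "tau n s t = ereal (s powr e1 * F t powr e2 * G t powr e1)" if "0 < t" "t < 2*pi" for t
    using tau_open[OF that, of n s] by (simp add: e1_def e2_def F_def G_def)
  have Fpos: "F t > 0" if "0 < t" "t < 2*pi" for t
  proof -
    have "s * (t/2) < 1 * (t/2)" using that assms by (intro mult_strict_right_mono) auto
    then have "s*(t/2) < pi" using that by linarith
    then show ?thesis using that assms unfolding F_def by (auto intro!: divide_pos_pos sin_gt_zero)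
  qed
  have Gpos: "G t > 0" if "0 < t" "t < 2*pi" for t
  proof -
    have "s * (t/2) < 1 * (t/2)" using that assms by (intro mult_strict_right_mono) auto
    then have "s*(t/2) < pi" using that by linarith
    then show ?thesis using that assms unfolding G_def by (auto intro!: divide_pos_pos hh_pos)
  qed
  have Flow: "s \<le> F t" if "0 < t" "t < 2*pi" for t
  proof -
    have "sin (t/2) > 0" using that by (intro sin_gt_zero) auto
    moreover have "s * sin (t/2) \<le> sin (s*(t/2))" using that assms by (intro sin_lower) auto
    ultimately show ?thesis unfolding F_def by (simp add: pos_le_divide_eq)
  qed
  have Glow: "s^3 \<le> G t" if "0 < t" "t < 2*pi" for t
  proof -
    have "hh (t/2) > 0" using that by (intro hh_pos) auto
    moreover have "s^3 * hh (t/2) \<le> hh (s*(t/2))" using that assms by (intro hh_lower) auto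
    ultimately show ?thesis unfolding G_def by (simp add: pos_le_divide_eq)
  qed
  have tau0: "tau n s 0 = ereal (s powr e1 * s powr e2 * (s^3) powr e1)"
  proof -
    have "s powr e1 * s powr e2 * (s^3) powr e1 = s powr (e1 + e2 + 3 * e1)"
    proof -
      have "(s^3) powr e1 = (s powr 3) powr e1" using assms by simp
      also have "\<dots> = s powr (3 * e1)" by (rule powr_powr)
      finally show ?thesis by (simp only: powr_add)
    qed
    also have "e1 + e2 + 3 * e1 = (2 * real n + 3) / (2 * real n + 1)"
    proof -
      have hp: "2 * real n + 1 > 0" by simp
      show ?thesis unfolding e1_def e2_def
        by (rule eq_divide_imp) (use hp in \<open>auto simp: field_simps add_divide_distrib[symmetric]\<close>)
    qed
    finally show ?thesis unfolding tau_def using pi_gt_zero by auto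
  qed
  fix a b assume ab: "a \<in> {0..2*pi}" "b \<in> {0..2*pi}" "a \<le> b"
  show "tau n s a \<le> tau n s b"
  proof (cases "b = 2*pi")
    case True then show ?thesis by (simp add: tau_def)
  next
    case bne: False
    then have b: "b < 2*pi" using ab by auto
    show ?thesis
    proof (cases "a = b")
      case True then show ?thesis by simp
    next
      case False
      then have ab': "a < b" using ab by auto
      show ?thesis
      proof (cases "a = 0")
        case True
        have bp: "0 < b" using ab' True by simp
        have "s powr e1 * s powr e2 * (s^3) powr e1 \<le> s powr e1 * F b powr e2 * G b powr e1"
          using Flow[OF bp b] Glow[OF bp b] assms e1 e2
          by (intro mult_mono powr_mono2 mult_nonneg_nonneg) auto
        then show ?thesis using tau0 tauo[OF bp b] True by simp
      next
        case False
        then have a0: "0 < a" using ab by auto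
        have "F a \<le> F b" unfolding F_def using sin_ratio_mono[of s "a/2" "b/2"] assms a0 ab' b by auto
        moreover have "G a \<le> G b" unfolding G_def using hh_ratio_mono[of s "a/2" "b/2"] assms a0 ab' b by auto
        ultimately have "s powr e1 * F a powr e2 * G a powr e1 \<le> s powr e1 * F b powr e2 * G b powr e1"
          using Fpos[OF a0] Gpos[OF a0] ab' b e1 e2 assms
          by (intro mult_mono powr_mono2 mult_nonneg_nonneg) auto
        then show ?thesis using tauo[OF a0] tauo b ab' a0 by simp
      qed
    qed
  qed
qed

end
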